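(* Let $k,d,b,\tilde b\ge0$ be measurable on $\mathbb{R}_+$ with $\int_0^{+\infty}k=\int_0^{+\infty}d=+\infty$ and $1<\int_0^{+\infty}\big(b(a)e^{-\int_0^ak}+\tilde b(a)e^{-\int_0^ad}\big)da<+\infty$. Let $c,\eta,\tilde c\in L^\infty_{loc}(\mathbb{R}^2)$ vanish at $(0,0)$, be nonnegative on $\mathbb{R}_+^2$, set $c_{tot}=c+\eta$, and assume $\partial_xc_{tot}>0$, $\partial_yc_{tot}\ge0$, $\partial_x\tilde c\ge0$, $\partial_y\tilde c>0$ and, for all $x_0,y_0\ge0$, $\tilde c(x_0,y)\to+\infty$ as $y\to+\infty$ and $c(x,y_0)\to+\infty$ as $x\to+\infty$. Assume moreover $$\Big\|\frac{\partial c_{tot}}{\partial y}\Big\|_\infty\le\inf_{(x,y)\in\mathbb{R}_+^2}\frac{\partial c_{tot}}{\partial x}(x,y).$$ Then every nonnegative solution $(N_1^*,N_2^* )$ of the steady-state system $$\int_0^{+\infty}\tilde b(a)e^{-\int_0^ad(u)du-\tilde c(N_1,N_2)a}da\cdot\int_0^{+\infty}\big(k(a)+\eta(N_1,N_2)\big)e^{-\int_0^ak(u)du-c_{tot}(N_1,N_2)a}da+\int_0^{+\infty}b(a)e^{-\int_0^ak(u)du-c_{tot}(N_1,N_2)a}da=1,$$ $$N_1\int_0^{+\infty}e^{-\int_0^ad(u)du-\tilde c(N_1,N_2)a}da\cdot\int_0^{+\infty}\big(k(a)+\eta(N_1,N_2)\big)e^{-\int_0^ak(u)du-c_{tot}(N_1,N_2)a}da-N_2\int_0^{+\infty}e^{-\int_0^ak(u)du-c_{tot}(N_1,N_2)a}da=0$$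 satisfies $N_1^*+N_2^*\ge N^*$, where $N^*$ is defined in the context.
   Context: $N^*$ is the total population size at the (unique) steady state of the one-phase model $\partial_tn+\partial_an=-(k(a)+c_{tot}(N(t),0))n$, $n(t,0)=\int_0^{+\infty}bn\,da$, $N(t)=\int_0^{+\infty}n(t,a)da$. Explicitly: if $\int_0^{+\infty}b(a)e^{-\int_0^ak}da>1$, let $\mu_0>0$ be the unique solution of $\int_0^{+\infty}b(a)e^{-\int_0^ak(u)du-\mu_0a}da=1$ and let $N^*>0$ be the unique value with $c_{tot}(N^*,0)=\mu_0$; if $\int_0^{+\infty}b(a)e^{-\int_0^ak}da\le1$, then $N^*=0$. The steady-state system characterises non-trivial steady states $(N_1,N_2)=(\int n_1^*,\int n_2^* )$ of the two-phase model with competition kernels identically equal to one. *)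

theory Defs
  imports "HOL-Analysis.Analysis"
begin

definition cumint :: "(real \<Rightarrow> real) \<Rightarrow> real \<Rightarrow> ennreal" where
  "cumint k a = (\<integral>\<^sup>+ u \<in> {0..a}. ennreal (k u) \<partial>lborel)"

definition surv :: "(real \<Rightarrow> real) \<Rightarrow> real \<Rightarrow> real" where
  "surv k a = (if cumint k a = \<infinity> then 0 else exp (- enn2real (cumint k a)))"

definition Ipos :: "(real \<Rightarrow> real) \<Rightarrow> ennreal" where
  "Ipos f = (\<integral>\<^sup>+ a \<in> {0..}. ennreal (f a) \<partial>lborel)"

text \<open>Characterisation of \<open>N*\<close> (steady state total population of the one-phase model),
  given \<open>k\<close>, \<open>b\<close> and \<open>ctot0 = (\<lambda>N. c_tot(N,0))\<close>.\<close>
definition is_Nstar :: "(real \<Rightarrow> real) \<Rightarrow> (real \<Rightarrow> real) \<Rightarrow> (real \<Rightarrow> real) \<Rightarrow> real \<Rightarrow> bool" where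
  "is_Nstar k b ctot0 N \<longleftrightarrow>
     (Ipos (\<lambda>a. b a * surv k a) \<le> 1 \<and> N = 0) \<or>
     (Ipos (\<lambda>a. b a * surv k a) > 1 \<and> N > 0 \<and>
       (\<exists>\<mu>0>0. Ipos (\<lambda>a. b a * surv k a * exp (- \<mu>0 * a)) = 1 \<and> ctot0 N = \<mu>0))"

end

theory Submission
  imports Defs
begin


lemma mvt0:
  fixes f f' :: "real \<Rightarrow> real"
  assumes d: "\<And>z. z \<ge> 0 \<Longrightarrow> (f has_real_derivative f' z) (at z within {0..})"
    and "0 \<le> a" "a \<le> b"
  shows "\<exists>\<xi>. a \<le> \<xi> \<and> \<xi> \<le> b \<and> f b - f a = f' \<xi> * (b - a)"
proof -
  have "\<exists>x\<in>{a..b}. f b - f a = (\<lambda>h. f' x * h) (b - a)"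
  proof (rule mvt_very_simple[of a b f "\<lambda>z h. f' z * h"])
    show "a \<le> b" by fact
    fix x assume "a \<le> x" "x \<le> b"
    then have "(f has_real_derivative f' x) (at x within {0..})" using d assms(2) by auto
    then have "(f has_derivative (*) (f' x)) (at x within {0..})" by (simp add: has_field_derivative_def)
    then show "(f has_derivative (\<lambda>h. f' x * h)) (at x within {a..b})"
      by (rule has_derivative_subset) (use assms(2) in auto)
  qed
  then show ?thesis by auto
qed

lemma ftc_bound:
  fixes g g' :: "real \<Rightarrow> real"
  assumes d: "\<And>y. y \<ge> 0 \<Longrightarrow> (g has_real_derivative g' y) (at y within {0..})"
    and ae: "AE y in lborel. y \<ge> 0 \<longrightarrow> g' y \<le> L"
    and h: "0 \<le> h"
  shows "g h - g 0 \<le> L * h"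
proof -
  have I: "(g' has_integral (g h - g 0)) {0..h}"
  proof (rule fundamental_theorem_of_calculus[OF h])
    fix x assume "x \<in> {0..h}"
    then have "(g has_real_derivative g' x) (at x within {0..})" using d by auto
    then have "(g has_vector_derivative g' x) (at x within {0..})"
      by (simp add: has_real_derivative_iff_has_vector_derivative)
    then show "(g has_vector_derivative g' x) (at x within {0..h})"
      by (rule has_vector_derivative_within_subset) auto
  qed
  from ae obtain N where N: "{x \<in> space lborel. \<not> (x \<ge> 0 \<longrightarrow> g' x \<le> L)} \<subseteq> N"
    "emeasure lborel N = 0" "N \<in> sets lborel" by (rule AE_E)
  have "N \<in> null_sets lborel" using N by auto
  then have "N \<in> null_sets lebesgue" by (rule null_sets_completionI)
  then have neg: "negligible N" by (simp add: negligible_iff_null_sets)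
  have I2: "((\<lambda>y. min (g' y) L) has_integral (g h - g 0)) {0..h}"
  proof (rule has_integral_spike[OF neg _ I])
    fix x assume "x \<in> {0..h} - N"
    then show "min (g' x) L = g' x" using N(1) by auto
  qed
  have I3: "((\<lambda>y. L) has_integral (L * h)) {0..h}"
    using has_integral_const_real[of L 0 h] h by (simp add: mult.commute)
  show ?thesis by (rule has_integral_le[OF I2 I3]) auto
qed



lemma surv_nonneg: "surv k a \<ge> 0"
  by (simp add: surv_def)

lemma cumint_mono: "a \<le> a' \<Longrightarrow> cumint k a \<le> cumint k a'"
  unfolding cumint_def
  by (intro nn_integral_mono) (auto split: split_indicator)

lemma surv_antimono: assumes "a \<le> a'" shows "surv k a' \<le> surv k a"
proof (cases "cumint k a' = \<infinity>")
  case True then show ?thesis by (simp add: surv_def)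
next
  case False
  have le: "cumint k a \<le> cumint k a'" by (rule cumint_mono[OF assms])
  then have "cumint k a \<noteq> \<infinity>" using False by (auto simp: top_unique)
  moreover have "enn2real (cumint k a) \<le> enn2real (cumint k a')"
    using le False by (simp add: enn2real_mono less_top)
  ultimately show ?thesis using False by (simp add: surv_def)
qed

lemma surv_meas: "surv k \<in> borel_measurable borel"
proof -
  have "mono (\<lambda>a. - surv k a)" by (auto simp: mono_def intro: surv_antimono)
  then have "(\<lambda>a. - surv k a) \<in> borel_measurable borel" by (rule borel_measurable_mono)
  then have "(\<lambda>a. - (- surv k a)) \<in> borel_measurable borel" by measurable
  then show ?thesis by simp
qed

lemma Ipos_strict:
  fixes b S :: "real \<Rightarrow> real"
  assumes bm: "set_borel_measurable lborel {0..} b"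
    and Sm: "S \<in> borel_measurable borel"
    and bnn: "\<And>a. a \<ge> 0 \<Longrightarrow> b a \<ge> 0" and Snn: "\<And>a. S a \<ge> 0"
    and one: "Ipos (\<lambda>a. b a * S a * exp (- \<mu> * a)) = 1"
    and lt: "C < \<mu>"
  shows "Ipos (\<lambda>a. b a * S a * exp (- C * a)) > 1"
proof -
  define bb where "bb a = indicator {0..} a *\<^sub>R b a" for a :: real
  have bbm: "bb \<in> borel_measurable lborel" using bm unfolding bb_def set_borel_measurable_def .
  define f1 where "f1 a = bb a * S a * exp (- \<mu> * a)" for a
  define g where "g a = bb a * S a * (exp (- C * a) - exp (- \<mu> * a))" for a
  have f1m: "(\<lambda>a. ennreal (f1 a) * indicator {0..} a) \<in> borel_measurable lborel"
    unfolding f1_def using bbm Sm by measurable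
  have gm: "(\<lambda>a. ennreal (g a) * indicator {0..} a) \<in> borel_measurable lborel"
    unfolding g_def using bbm Sm by measurable
  have gnn: "a \<ge> 0 \<Longrightarrow> g a \<ge> 0" for a
    unfolding g_def bb_def using bnn[of a] Snn[of a] lt
    by (intro mult_nonneg_nonneg) (auto simp: mult_right_mono)
  have f1nn: "a \<ge> 0 \<Longrightarrow> f1 a \<ge> 0" for a
    unfolding f1_def bb_def using bnn[of a] Snn[of a] by auto
  have e1: "Ipos (\<lambda>a. b a * S a * exp (- \<mu> * a)) = (\<integral>\<^sup>+ a. ennreal (f1 a) * indicator {0..} a \<partial>lborel)"
    unfolding Ipos_def f1_def bb_def by (intro nn_integral_cong) (auto split: split_indicator)
  have e2: "Ipos (\<lambda>a. b a * S a * exp (- C * a)) =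
     (\<integral>\<^sup>+ a. ennreal (f1 a) * indicator {0..} a + ennreal (g a) * indicator {0..} a \<partial>lborel)"
    unfolding Ipos_def
  proof (intro nn_integral_cong)
    fix a :: real
    show "ennreal (b a * S a * exp (- C * a)) * indicator {0..} a =
       ennreal (f1 a) * indicator {0..} a + ennreal (g a) * indicator {0..} a"
    proof (cases "a \<ge> 0")
      case True
      then have "ennreal (f1 a) + ennreal (g a) = ennreal (f1 a + g a)"
        using f1nn gnn by (simp add: ennreal_plus)
      moreover have "f1 a + g a = b a * S a * exp (- C * a)"
        unfolding f1_def g_def bb_def using True by (simp add: algebra_simps)
      ultimately show ?thesis using True by (simp add: distrib_right[symmetric])
    qed auto
  qed
  also have "\<dots> = (\<integral>\<^sup>+ a. ennreal (f1 a) * indicator {0..} a \<partial>lborel) +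
      (\<integral>\<^sup>+ a. ennreal (g a) * indicator {0..} a \<partial>lborel)"
    by (rule nn_integral_add[OF f1m gm])
  finally have split: "Ipos (\<lambda>a. b a * S a * exp (- C * a)) = 1 + (\<integral>\<^sup>+ a. ennreal (g a) * indicator {0..} a \<partial>lborel)"
    using one e1 by simp
  have pos: "(\<integral>\<^sup>+ a. ennreal (g a) * indicator {0..} a \<partial>lborel) \<noteq> 0"
  proof
    assume "(\<integral>\<^sup>+ a. ennreal (g a) * indicator {0..} a \<partial>lborel) = 0"
    then have ae: "AE a in lborel. ennreal (g a) * indicator {0..} a = 0"
      using nn_integral_0_iff_AE[OF gm] by simp
    have "AE a in lborel. ennreal (f1 a) * indicator {0..} a = 0"
      using ae AE_lborel_singleton[of "0::real"]
    proof eventually_elim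
      case (elim a)
      show ?case
      proof (cases "a > 0")
        case True
        then have "g a \<le> 0" using elim by (auto simp: indicator_def ennreal_eq_0_iff)
        moreover have "exp (- C * a) - exp (- \<mu> * a) > 0" using True lt by simp
        ultimately have "bb a * S a \<le> 0" unfolding g_def
          by (simp add: mult_le_0_iff)
        moreover have "bb a * S a \<ge> 0" using bnn[of a] Snn[of a] True by (simp add: bb_def)
        ultimately have "f1 a = 0" unfolding f1_def by simp
        then show ?thesis by simp
      qed (use elim in auto)
    qed
    then have "(\<integral>\<^sup>+ a. ennreal (f1 a) * indicator {0..} a \<partial>lborel) = 0"
      by (simp add: nn_integral_0_iff_AE[OF f1m])
    then show False using one e1 by simp
  qed
  have "(1::ennreal) + 0 < 1 + (\<integral>\<^sup>+ a. ennreal (g a) * indicator {0..} a \<partial>lborel)"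
    using pos by (subst ennreal_add_left_cancel_less) (auto simp: zero_less_iff_neq_zero)
  then show ?thesis unfolding split by simp
qed


theorem proposition4:
  fixes k d b bt :: "real \<Rightarrow> real"
    and c \<eta> ct :: "real \<Rightarrow> real \<Rightarrow> real"
    and ctot_x ctot_y ct_x ct_y :: "real \<Rightarrow> real \<Rightarrow> real"
    and N1 N2 Nst :: real
  assumes meas: "set_borel_measurable lborel {0..} k" "set_borel_measurable lborel {0..} d"
      "set_borel_measurable lborel {0..} b" "set_borel_measurable lborel {0..} bt"
    and nonneg: "\<And>a. a \<ge> 0 \<Longrightarrow> k a \<ge> 0" "\<And>a. a \<ge> 0 \<Longrightarrow> d a \<ge> 0"
      "\<And>a. a \<ge> 0 \<Longrightarrow> b a \<ge> 0" "\<And>a. a \<ge> 0 \<Longrightarrow> bt a \<ge> 0"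
    and k_inf: "Ipos k = \<infinity>" and d_inf: "Ipos d = \<infinity>"
    and R_gt: "1 < Ipos (\<lambda>a. b a * surv k a + bt a * surv d a)"
    and R_fin: "Ipos (\<lambda>a. b a * surv k a + bt a * surv d a) < \<infinity>"
    and c_meas: "case_prod c \<in> borel_measurable borel" "case_prod \<eta> \<in> borel_measurable borel"
      "case_prod ct \<in> borel_measurable borel"
    and c_locbdd: "\<And>K. compact K \<Longrightarrow> bounded (case_prod c ` K)"
      "\<And>K. compact K \<Longrightarrow> bounded (case_prod \<eta> ` K)"
      "\<And>K. compact K \<Longrightarrow> bounded (case_prod ct ` K)"
    and c00: "c 0 0 = 0" "\<eta> 0 0 = 0" "ct 0 0 = 0"
    and c_nn: "\<And>x y. x \<ge> 0 \<Longrightarrow> y \<ge> 0 \<Longrightarrow> c x y \<ge> 0"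
      "\<And>x y. x \<ge> 0 \<Longrightarrow> y \<ge> 0 \<Longrightarrow> \<eta> x y \<ge> 0"
      "\<And>x y. x \<ge> 0 \<Longrightarrow> y \<ge> 0 \<Longrightarrow> ct x y \<ge> 0"
    and ctot_dx: "\<And>x y. x \<ge> 0 \<Longrightarrow> y \<ge> 0 \<Longrightarrow>
        ((\<lambda>x'. c x' y + \<eta> x' y) has_real_derivative ctot_x x y) (at x within {0..})"
    and ctot_dy: "\<And>x y. x \<ge> 0 \<Longrightarrow> y \<ge> 0 \<Longrightarrow>
        ((\<lambda>y'. c x y' + \<eta> x y') has_real_derivative ctot_y x y) (at y within {0..})"
    and ct_dx: "\<And>x y. x \<ge> 0 \<Longrightarrow> y \<ge> 0 \<Longrightarrow>
        ((\<lambda>x'. ct x' y) has_real_derivative ct_x x y) (at x within {0..})"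
    and ct_dy: "\<And>x y. x \<ge> 0 \<Longrightarrow> y \<ge> 0 \<Longrightarrow>
        ((\<lambda>y'. ct x y') has_real_derivative ct_y x y) (at y within {0..})"
    and signs: "\<And>x y. x \<ge> 0 \<Longrightarrow> y \<ge> 0 \<Longrightarrow> ctot_x x y > 0"
      "\<And>x y. x \<ge> 0 \<Longrightarrow> y \<ge> 0 \<Longrightarrow> ctot_y x y \<ge> 0"
      "\<And>x y. x \<ge> 0 \<Longrightarrow> y \<ge> 0 \<Longrightarrow> ct_x x y \<ge> 0"
      "\<And>x y. x \<ge> 0 \<Longrightarrow> y \<ge> 0 \<Longrightarrow> ct_y x y > 0"
    and ct_lim: "\<And>x0. x0 \<ge> 0 \<Longrightarrow> filterlim (\<lambda>y. ct x0 y) at_top at_top"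
    and c_lim: "\<And>y0. y0 \<ge> 0 \<Longrightarrow> filterlim (\<lambda>x. c x y0) at_top at_top"
    and norm_cond: "\<And>x' y'. x' \<ge> 0 \<Longrightarrow> y' \<ge> 0 \<Longrightarrow>
        (AE p in lborel. fst p \<ge> 0 \<and> snd p \<ge> 0 \<longrightarrow>
           \<bar>ctot_y (fst p) (snd p)\<bar> \<le> ctot_x x' y')"
    and N_nn: "N1 \<ge> 0" "N2 \<ge> 0"
    and fin: "Ipos (\<lambda>a. bt a * surv d a * exp (- ct N1 N2 * a)) < \<infinity>"
      "Ipos (\<lambda>a. (k a + \<eta> N1 N2) * surv k a * exp (- (c N1 N2 + \<eta> N1 N2) * a)) < \<infinity>"
      "Ipos (\<lambda>a. b a * surv k a * exp (- (c N1 N2 + \<eta> N1 N2) * a)) < \<infinity>"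
      "Ipos (\<lambda>a. surv d a * exp (- ct N1 N2 * a)) < \<infinity>"
      "Ipos (\<lambda>a. surv k a * exp (- (c N1 N2 + \<eta> N1 N2) * a)) < \<infinity>"
    and eq1: "Ipos (\<lambda>a. bt a * surv d a * exp (- ct N1 N2 * a))
        * Ipos (\<lambda>a. (k a + \<eta> N1 N2) * surv k a * exp (- (c N1 N2 + \<eta> N1 N2) * a))
        + Ipos (\<lambda>a. b a * surv k a * exp (- (c N1 N2 + \<eta> N1 N2) * a)) = 1"
    and eq2: "ennreal N1 * Ipos (\<lambda>a. surv d a * exp (- ct N1 N2 * a))
        * Ipos (\<lambda>a. (k a + \<eta> N1 N2) * surv k a * exp (- (c N1 N2 + \<eta> N1 N2) * a))
        = ennreal N2 * Ipos (\<lambda>a. surv k a * exp (- (c N1 N2 + \<eta> N1 N2) * a))"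
    and Nst: "is_Nstar k b (\<lambda>N. c N 0 + \<eta> N 0) Nst"
  shows "N1 + N2 \<ge> Nst"
  proof -
  have Cnn: "c N1 N2 + \<eta> N1 N2 \<ge> 0" using c_nn(1,2) N_nn by (simp add: add_nonneg_nonneg)
  show ?thesis
  proof (cases "Nst = 0")
    case True then show ?thesis using N_nn by simp
  next
    case False
    then obtain \<mu>0 where mu: "\<mu>0 > 0" "Ipos (\<lambda>a. b a * surv k a * exp (- \<mu>0 * a)) = 1"
      "c Nst 0 + \<eta> Nst 0 = \<mu>0" and Nstpos: "Nst > 0"
      using Nst unfolding is_Nstar_def by auto
    have Cge: "c N1 N2 + \<eta> N1 N2 \<ge> \<mu>0"
    proof (rule ccontr)
      assume "\<not> ?thesis"
      then have "c N1 N2 + \<eta> N1 N2 < \<mu>0" by simp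
      from Ipos_strict[OF meas(3) surv_meas nonneg(3) surv_nonneg mu(2) this]
      have gt: "Ipos (\<lambda>a. b a * surv k a * exp (- (c N1 N2 + \<eta> N1 N2) * a)) > 1" .
      have "Ipos (\<lambda>a. b a * surv k a * exp (- (c N1 N2 + \<eta> N1 N2) * a)) \<le> 1"
        by (subst eq1[symmetric], rule add_increasing) auto
      then show False using gt by simp
    qed
    show ?thesis
    proof (rule ccontr)
      assume "\<not> ?thesis"
      then have lt: "N1 + N2 < Nst" by simp
      define T where "T = (\<lambda>s. ctot_x s 0) ` {0..}"
      define L where "L = Inf T"
      have Tne: "T \<noteq> {}" unfolding T_def by auto
      have Tbdd: "bdd_below T" unfolding T_def bdd_below_def
        using signs(1) by (auto intro!: exI[of _ 0] less_imp_le)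
      have Lle: "\<And>s. s \<ge> 0 \<Longrightarrow> L \<le> ctot_x s 0"
        unfolding L_def by (rule cInf_lower[OF _ Tbdd]) (auto simp: T_def)
      have approx: "\<exists>s\<ge>0. ctot_x s 0 < L + 1 / Suc n" for n :: nat
      proof -
        have "Inf T < L + 1 / Suc n" unfolding L_def by simp
        then obtain t where "t \<in> T" "t < L + 1 / Suc n"
          using cInf_less_iff[OF Tne Tbdd] by blast
        then show ?thesis unfolding T_def by auto
      qed
      have "\<forall>n::nat. AE p in lborel. fst p \<ge> 0 \<and> snd p \<ge> 0 \<longrightarrow>
               \<bar>ctot_y (fst p) (snd p)\<bar> \<le> L + 1 / Suc n"
      proof
        fix n :: nat
        obtain s where s: "s \<ge> 0" "ctot_x s 0 < L + 1 / Suc n" using approx by blast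
        show "AE p in lborel. fst p \<ge> 0 \<and> snd p \<ge> 0 \<longrightarrow>
               \<bar>ctot_y (fst p) (snd p)\<bar> \<le> L + 1 / Suc n"
          using norm_cond[OF s(1) order_refl] by eventually_elim (use s in auto)
      qed
      then have "AE p in lborel. \<forall>n::nat. fst p \<ge> 0 \<and> snd p \<ge> 0 \<longrightarrow>
               \<bar>ctot_y (fst p) (snd p)\<bar> \<le> L + 1 / Suc n"
        by (subst AE_all_countable) (rule allI, erule allE)
      then have AE2: "AE p in lborel. fst p \<ge> 0 \<and> snd p \<ge> 0 \<longrightarrow> \<bar>ctot_y (fst p) (snd p)\<bar> \<le> L"
      proof eventually_elim
        case (elim p)
        show ?case
        proof
          assume h: "fst p \<ge> 0 \<and> snd p \<ge> 0"
          show "\<bar>ctot_y (fst p) (snd p)\<bar> \<le> L"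
          proof (rule ccontr)
            assume "\<not> ?thesis"
            then have "0 < \<bar>ctot_y (fst p) (snd p)\<bar> - L" by simp
            then obtain n where "inverse (real (Suc n)) < \<bar>ctot_y (fst p) (snd p)\<bar> - L"
              using reals_Archimedean by blast
            moreover have "\<bar>ctot_y (fst p) (snd p)\<bar> \<le> L + 1 / Suc n" using elim h by blast
            ultimately show False by (simp add: field_simps)
          qed
        qed
      qed
      have "AE p in (lborel \<Otimes>\<^sub>M lborel). fst p \<ge> 0 \<and> snd p \<ge> 0 \<longrightarrow>
              \<bar>ctot_y (fst p) (snd p)\<bar> \<le> (L::real)"
        using AE2 by (subst lborel_prod[where 'a=real and 'b=real])
      from lborel_pair.AE_pair[OF this]
      have AEx: "AE x in lborel. AE y in lborel. x \<ge> 0 \<and> y \<ge> 0 \<longrightarrow> \<bar>ctot_y x y\<bar> \<le> L"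
        by simp
      define \<epsilon> where "\<epsilon> = Nst - N1 - N2"
      have epos: "\<epsilon> > 0" using lt by (simp add: \<epsilon>_def)
      obtain x where x: "N1 < x" "x < N1 + \<epsilon>"
        and xae: "AE y in lborel. x \<ge> 0 \<and> y \<ge> 0 \<longrightarrow> \<bar>ctot_y x y\<bar> \<le> L"
      proof -
        from AEx obtain N where N: "{x \<in> space lborel. \<not> (AE y in lborel. x \<ge> 0 \<and> y \<ge> 0 \<longrightarrow> \<bar>ctot_y x y\<bar> \<le> L)} \<subseteq> N"
          "emeasure lborel N = 0" "N \<in> sets lborel" by (rule AE_E)
        have "\<not> {N1<..<N1 + \<epsilon>} \<subseteq> N"
        proof
          assume "{N1<..<N1 + \<epsilon>} \<subseteq> N"
          then have "emeasure lborel {N1<..<N1 + \<epsilon>} \<le> emeasure lborel N"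
            using N(3) by (intro emeasure_mono) auto
          then show False using N(2) epos by simp
        qed
        then obtain x where "x \<in> {N1<..<N1 + \<epsilon>}" "x \<notin> N" by blast
        then show ?thesis using that N(1) by auto
      qed
      have x0: "x \<ge> 0" using x N_nn by simp
      have h1: "\<And>z. 0 \<le> z \<Longrightarrow> ((\<lambda>x'. c x' N2 + \<eta> x' N2) has_real_derivative ctot_x z N2) (at z within {0..})"
        using ctot_dx N_nn by blast
      obtain \<xi>1 where \<xi>1: "N1 \<le> \<xi>1" "\<xi>1 \<le> x"
        "(c x N2 + \<eta> x N2) - (c N1 N2 + \<eta> N1 N2) = ctot_x \<xi>1 N2 * (x - N1)"
        using mvt0[OF h1 N_nn(1) less_imp_le[OF x(1)]] by blast
      have s1: "c N1 N2 + \<eta> N1 N2 \<le> c x N2 + \<eta> x N2"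
      proof -
        have "ctot_x \<xi>1 N2 * (x - N1) \<ge> 0"
          using \<xi>1 signs(1)[of \<xi>1 N2] N_nn x by (intro mult_nonneg_nonneg) auto
        then show ?thesis using \<xi>1(3) by linarith
      qed
      have s2: "(c x N2 + \<eta> x N2) - (c x 0 + \<eta> x 0) \<le> L * N2"
      proof (rule ftc_bound[of "\<lambda>y'. c x y' + \<eta> x y'" "ctot_y x", simplified])
        show "\<And>y. 0 \<le> y \<Longrightarrow> ((\<lambda>y'. c x y' + \<eta> x y') has_real_derivative ctot_y x y) (at y within {0..})"
          using ctot_dy x0 by auto
        show "AE y in lborel. 0 \<le> y \<longrightarrow> ctot_y x y \<le> L"
          using xae by eventually_elim (use x0 in auto)
        show "0 \<le> N2" by (rule N_nn)
      qed
      have h0: "\<And>z. 0 \<le> z \<Longrightarrow> ((\<lambda>x'. c x' 0 + \<eta> x' 0) has_real_derivative ctot_x z 0) (at z within {0..})"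
        using ctot_dx by blast
      have xN: "x \<le> x + N2" using N_nn by simp
      obtain \<xi>3 where \<xi>3: "x \<le> \<xi>3" "\<xi>3 \<le> x + N2"
        "(c (x + N2) 0 + \<eta> (x + N2) 0) - (c x 0 + \<eta> x 0) = ctot_x \<xi>3 0 * (x + N2 - x)"
        using mvt0[OF h0 x0 xN] by blast
      have s3: "(c (x + N2) 0 + \<eta> (x + N2) 0) - (c x 0 + \<eta> x 0) \<ge> L * N2"
      proof -
        have "L * N2 \<le> ctot_x \<xi>3 0 * N2"
          using \<xi>3 Lle[of \<xi>3] x0 N_nn by (intro mult_right_mono) auto
        then show ?thesis using \<xi>3(3) by simp
      qed
      have xN0: "0 \<le> x + N2" using N_nn x0 by simp
      have xN1: "x + N2 \<le> Nst" using x by (simp add: \<epsilon>_def)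
      obtain \<xi>4 where \<xi>4: "x + N2 \<le> \<xi>4" "\<xi>4 \<le> Nst"
        "(c Nst 0 + \<eta> Nst 0) - (c (x + N2) 0 + \<eta> (x + N2) 0) = ctot_x \<xi>4 0 * (Nst - (x + N2))"
        using mvt0[OF h0 xN0 xN1] by blast
      have s4: "(c Nst 0 + \<eta> Nst 0) - (c (x + N2) 0 + \<eta> (x + N2) 0) > 0"
      proof -
        have "ctot_x \<xi>4 0 * (Nst - (x + N2)) > 0"
          using \<xi>4 signs(1)[of \<xi>4 0] x x0 N_nn by (intro mult_pos_pos) (auto simp: \<epsilon>_def)
        then show ?thesis using \<xi>4(3) by linarith
      qed
      show False using s1 s2 s3 s4 Cge mu(3) by linarith
    qed
  qed
qed

end
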